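(* Let $\mathbf{x}$ be a parking function of length $n$, run Algorithm A on $\mathbf{x}$, and let $1\le i<j\le n$. Then $|s_i(\mathbf{x})|>|s_j(\mathbf{x})|$ if and only if $P(\mathbf{x})$ contains the up edge $i\rightarrow j$.
   Context: A parking function of length $n$ is a sequence of positive integers which, sorted increasingly as $x_{(1)}\le\dots\le x_{(n)}$, satisfies $x_{(k)}\le k$ for all $k$. Algorithm A: Input a parking function $\mathbf{x}\in\mathbb{Z}_{>0}^n$; start with the vertex set $[n]$ and no edges, and set $\mathbf{y}:=\mathbf{x}-(1,\dots,1)$. Repeat the following. (Up step) If some $y_k=0$: let $j:=\max\{k: y_k=0\}$ (the up feeder); for every $k>j$ with $y_k>0$, introduce the directed (up) edge $j\rightarrow k$ and replace $y_k$ by $y_k-1$; replace every entry that was negative at the start of this step by that entry minus $1$; set $y_j:=-1$; repeat. (Down step) Else, if some $y_k>0$: among all indices $j$ such that there is $k<j$ with $y_k>0$ and the edge $k\leftarrow j$ not yet introduced (down feeder candidates), choose $j$ with minimal $y_j$ (the down feeder); for every $k<j$ with $y_k>0$, introduce the directed (down) edge $k\leftarrow j$ (directed from $j$ to $k$) and replace $y_k$ by $y_k-1$; repeat. (Stop) Else (all $y_k<0$): join every pair of vertices not yet joined by an undirected (downish) edge and stop. Output: the mixed graph $P(\mathbf{x})$ and the source priority vector $s(\mathbf{x}):=(y_1,\dots,y_n)$ (final values). *)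

theory Defs
  imports Main
begin

text \<open>Parking functions of length n are lists xs with length n; the entry
  x_i (1-based) is xs ! (i - 1).\<close>
definition parking_function :: "nat list \<Rightarrow> bool" where
  "parking_function xs \<longleftrightarrow>
     (\<forall>v \<in> set xs. 0 < v) \<and> (\<forall>k < length xs. sort xs ! k \<le> k + 1)"

text \<open>State of Algorithm A on vertex set {1..n}: the vector y (indices 1..n),
  the set U of up edges (j,k) meaning j \<rightarrow> k, and the set D of down
  edges (j,k) meaning the edge k \<leftarrow> j directed from j to k.\<close>
type_synonym algA_state = "(nat \<Rightarrow> int) \<times> (nat \<times> nat) set \<times> (nat \<times> nat) set"

definition algA_init :: "nat list \<Rightarrow> algA_state" where
  "algA_init xs =
     ((\<lambda>k. if k \<in> {1..length xs} then int (xs ! (k - 1)) - 1 else 0), {}, {})"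

definition up_step :: "nat \<Rightarrow> algA_state \<Rightarrow> algA_state \<Rightarrow> bool" where
  "up_step n st st' \<longleftrightarrow>
     (case st of (y, U, D) \<Rightarrow>
       (\<exists>j \<in> {1..n}. y j = 0 \<and> (\<forall>k \<in> {1..n}. y k = 0 \<longrightarrow> k \<le> j) \<and>
          st' = ((\<lambda>k. if k \<notin> {1..n} then y k
                      else if k = j then -1
                      else if j < k \<and> 0 < y k then y k - 1
                      else if y k < 0 then y k - 1
                      else y k),
                 U \<union> {(j, k) | k. k \<in> {1..n} \<and> j < k \<and> 0 < y k},
                 D)))"

definition down_cand :: "nat \<Rightarrow> algA_state \<Rightarrow> nat \<Rightarrow> bool" where
  "down_cand n st j \<longleftrightarrow>
     (case st of (y, U, D) \<Rightarrow>
        j \<in> {1..n} \<and> (\<exists>k \<in> {1..n}. k < j \<and> 0 < y k \<and> (j, k) \<notin> D))"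

definition down_step :: "nat \<Rightarrow> algA_state \<Rightarrow> algA_state \<Rightarrow> bool" where
  "down_step n st st' \<longleftrightarrow>
     (case st of (y, U, D) \<Rightarrow>
       (\<forall>k \<in> {1..n}. y k \<noteq> 0) \<and> (\<exists>k \<in> {1..n}. 0 < y k) \<and>
       (\<exists>j. down_cand n st j \<and> (\<forall>j'. down_cand n st j' \<longrightarrow> y j \<le> y j') \<and>
          st' = ((\<lambda>k. if k \<in> {1..n} \<and> k < j \<and> 0 < y k then y k - 1 else y k),
                 U,
                 D \<union> {(j, k) | k. k \<in> {1..n} \<and> k < j \<and> 0 < y k})))"

text \<open>One step of Algorithm A (the choice of down feeder among ties is left
  nondeterministic).\<close>
definition algA_step :: "nat \<Rightarrow> algA_state \<Rightarrow> algA_state \<Rightarrow> bool" where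
  "algA_step n st st' \<longleftrightarrow> up_step n st st' \<or> down_step n st st'"

definition algA_stopped :: "nat \<Rightarrow> algA_state \<Rightarrow> bool" where
  "algA_stopped n st \<longleftrightarrow> (case st of (y, U, D) \<Rightarrow> (\<forall>k \<in> {1..n}. y k < 0))"

text \<open>Output of a complete run of Algorithm A on xs: source priority vector s,
  up edges U, down edges D, and the undirected (downish) edges W added at the stop.\<close>
definition algA_output ::
  "nat list \<Rightarrow> (nat \<Rightarrow> int) \<Rightarrow> (nat \<times> nat) set \<Rightarrow> (nat \<times> nat) set \<Rightarrow> nat set set \<Rightarrow> bool" where
  "algA_output xs s U D W \<longleftrightarrow>
     (algA_step (length xs))\<^sup>*\<^sup>* (algA_init xs) (s, U, D) \<and>
     algA_stopped (length xs) (s, U, D) \<and>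
     W = {{a, b} | a b. a \<in> {1..length xs} \<and> b \<in> {1..length xs} \<and> a \<noteq> b \<and>
            (a, b) \<notin> U \<union> D \<and> (b, a) \<notin> U \<union> D}"

end

theory Submission
  imports Defs
begin


definition J :: "nat \<Rightarrow> algA_state \<Rightarrow> bool" where
 "J n st \<longleftrightarrow> (case st of (y,U,D) \<Rightarrow> (\<forall>i j. 1\<le>i \<longrightarrow> i<j \<longrightarrow> j\<le>n \<longrightarrow>
    ((i,j)\<in>U \<longrightarrow> y i<0 \<and> (y j \<ge> 0 \<or> y i < y j)) \<and> ((i,j)\<notin>U \<and> y i<0 \<longrightarrow> y j<0 \<and> y j < y i)))"

lemma J_up: assumes "J n (y,U,D)" "up_step n (y,U,D) st'" shows "J n st'"
proof -
  from assms(2) obtain j0 y' U' where j0: "j0\<in>{1..n}" "y j0 = 0" "\<forall>k \<in> {1..n}. y k = 0 \<longrightarrow> k \<le> j0"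
   and st': "st' = (y',U',D)" and y': "y' = (\<lambda>k. if k \<notin> {1..n} then y k
                      else if k = j0 then -1
                      else if j0 < k \<and> 0 < y k then y k - 1
                      else if y k < 0 then y k - 1
                      else y k)" and U': "U' =
                 U \<union> {(j0, k) | k. k \<in> {1..n} \<and> j0 < k \<and> 0 < y k}" unfolding up_step_def by auto
  show ?thesis unfolding st' J_def
  proof (simp only: prod.case, intro allI impI conjI)
    fix i j assume ij: "1\<le>i" "i<j" "j\<le>n"
    have hi: "(i,j)\<in>U \<longrightarrow> y i<0 \<and> (y j \<ge> 0 \<or> y i < y j)"
      and hn: "(i,j)\<notin>U \<and> y i<0 \<longrightarrow> y j<0 \<and> y j < y i"
      using assms(1) ij unfolding J_def by auto
    { assume "(i,j) \<in> U'" then show "y' i < 0" "y' j \<ge> 0 \<or> y' i < y' j"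
        using hi ij j0 unfolding U' y' by auto }
    have hz: "j0 < j \<Longrightarrow> y j \<noteq> 0" using j0(3) ij by fastforce
    { assume a: "(i,j) \<notin> U' \<and> y' i < 0"  
      then show "y' j < 0" "y' j < y' i"
        using hn ij j0 hz unfolding U' y' by (auto split: if_splits) }
  qed
qed

lemma J_down: assumes "J n (y,U,D)" "down_step n (y,U,D) st'" shows "J n st'"
proof -
  from assms(2) obtain j0 y' D' where 
   st': "st' = (y',U,D')" and y': "y' = (\<lambda>k. if k \<in> {1..n} \<and> k < j0 \<and> 0 < y k then y k - 1 else y k)"
    unfolding down_step_def by auto
  show ?thesis unfolding st' J_def
  proof (simp only: prod.case, intro allI impI conjI)
    fix i j assume ij: "1\<le>i" "i<j" "j\<le>n"
    have hi: "(i,j)\<in>U \<longrightarrow> y i<0 \<and> (y j \<ge> 0 \<or> y i < y j)"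
      and hn: "(i,j)\<notin>U \<and> y i<0 \<longrightarrow> y j<0 \<and> y j < y i"
      using assms(1) ij unfolding J_def by auto
    { assume "(i,j) \<in> U" then show "y' i < 0" "y' j \<ge> 0 \<or> y' i < y' j"
        using hi ij unfolding y' by auto }
    { assume a: "(i,j) \<notin> U \<and> y' i < 0"  
      then show "y' j < 0" "y' j < y' i"
        using hn ij unfolding y' by (auto split: if_splits) }
  qed
qed

lemma J_reach: assumes pf: "parking_function xs" and "(algA_step n)\<^sup>*\<^sup>* (algA_init xs) st" shows "J n st"
  using assms(2)
proof (induction rule: rtranclp_induct)
  case base then show ?case using pf unfolding J_def algA_init_def parking_function_def
    by (auto simp: nth_mem)
next
  case (step st1 st2)
  obtain y U D where "st1 = (y,U,D)" by (cases st1) auto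
  then show ?case using step J_up J_down unfolding algA_step_def by metis
qed



lemma pf_count:
  assumes pf: "parking_function xs" and c: "c \<le> length xs"
  shows "c \<le> card {i\<in>{1..length xs}. xs!(i-1) \<le> c}"
proof -
  have "{i\<in>{1..length xs}. xs!(i-1) \<le> c} = Suc ` {i. i < length xs \<and> xs!i \<le> c}"
  proof (rule set_eqI, rule iffI)
    fix i assume "i \<in> {i\<in>{1..length xs}. xs!(i-1) \<le> c}"
    then show "i \<in> Suc ` {i. i < length xs \<and> xs!i \<le> c}"
      by (intro image_eqI[of _ _ "i-1"]) auto
  qed auto
  hence "card {i\<in>{1..length xs}. xs!(i-1) \<le> c} = card {i. i < length xs \<and> xs!i \<le> c}"
    by (simp add: card_image)
  also have "\<dots> = length (filter (\<lambda>v. v \<le> c) xs)" by (simp add: length_filter_conv_card)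
  also have "\<dots> = length (filter (\<lambda>v. v \<le> c) (sort xs))"
    by (simp only: filter_sort length_sort)
  also have "\<dots> = card {i. i < length (sort xs) \<and> sort xs ! i \<le> c}" by (simp add: length_filter_conv_card)
  finally have eq: "card {i\<in>{1..length xs}. xs!(i-1) \<le> c} = card {i. i < length (sort xs) \<and> sort xs ! i \<le> c}" .
  have "{..<c} \<subseteq> {i. i < length (sort xs) \<and> sort xs ! i \<le> c}"
    using pf c unfolding parking_function_def by auto (metis Suc_leI le_trans order.strict_trans2)
  hence "card {..<c} \<le> card {i. i < length (sort xs) \<and> sort xs ! i \<le> c}"
    by (intro card_mono) auto
  thus ?thesis using eq by simp
qed



definition Inv :: "nat list \<Rightarrow> algA_state \<Rightarrow> bool" where
"Inv xs st \<longleftrightarrow> (case st of (y,U,D) \<Rightarrow> \<forall>k\<in>{1..length xs}. 0 \<le> y k \<longrightarrow>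
  y k + int (card {j\<in>{1..length xs}. j<k \<and> y j<0}) + int (card {j\<in>{k<..length xs}. (j,k)\<in>D}) \<le> int (xs!(k-1)) - 1)"

definition mu :: "nat \<Rightarrow> (nat \<Rightarrow> int) \<Rightarrow> nat" where
"mu n y = (\<Sum>k\<in>{1..n}. if 0 \<le> y k then nat (y k + 1) else 0)"

lemma up_E:
  assumes "up_step n (y,U,D) st'"
  obtains j0 where "j0\<in>{1..n}" "y j0 = 0" "\<forall>k \<in> {1..n}. y k = 0 \<longrightarrow> k \<le> j0"
   "st' = ((\<lambda>k. if k \<notin> {1..n} then y k
                      else if k = j0 then -1
                      else if j0 < k \<and> 0 < y k then y k - 1
                      else if y k < 0 then y k - 1
                      else y k),
                 U \<union> {(j0, k) | k. k \<in> {1..n} \<and> j0 < k \<and> 0 < y k}, D)"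
  using assms unfolding up_step_def by auto

lemma down_E:
  assumes "down_step n (y,U,D) st'"
  obtains j0 where "\<forall>k \<in> {1..n}. y k \<noteq> 0" "down_cand n (y,U,D) j0"
   "st' = ((\<lambda>k. if k \<in> {1..n} \<and> k < j0 \<and> 0 < y k then y k - 1 else y k),
                 U, D \<union> {(j0, k) | k. k \<in> {1..n} \<and> k < j0 \<and> 0 < y k})"
  using assms unfolding down_step_def by auto

lemma Inv_up:
  assumes n: "n = length xs" and I: "Inv xs (y,U,D)" and st: "up_step n (y,U,D) st'"
  shows "Inv xs st'"
proof -
  obtain j0 where j0: "j0\<in>{1..n}" "y j0 = 0" "\<forall>k \<in> {1..n}. y k = 0 \<longrightarrow> k \<le> j0"
    and st': "st' = ((\<lambda>k. if k \<notin> {1..n} then y k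
                      else if k = j0 then -1
                      else if j0 < k \<and> 0 < y k then y k - 1
                      else if y k < 0 then y k - 1
                      else y k),
                 U \<union> {(j0, k) | k. k \<in> {1..n} \<and> j0 < k \<and> 0 < y k}, D)"
    using up_E[OF st] by blast
  define y' where "y' = (\<lambda>k. if k \<notin> {1..n} then y k
                      else if k = j0 then -1
                      else if j0 < k \<and> 0 < y k then y k - 1
                      else if y k < 0 then y k - 1
                      else y k)"
  show ?thesis unfolding st' Inv_def prod.case y'_def[symmetric] n[symmetric]
  proof (intro ballI impI)
    fix k assume k: "k \<in> {1..n}" and yk: "0 \<le> y' k"
    have old: "y k + int (card {j\<in>{1..n}. j<k \<and> y j<0}) + int (card {j\<in>{k<..n}. (j,k)\<in>D}) \<le> int (xs!(k-1)) - 1"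
      and kj: "k \<noteq> j0" and yk0: "0 \<le> y k"
      using I k yk unfolding Inv_def n y'_def by (auto split: if_splits)
    have neg: "\<And>j. j \<in> {1..n} \<Longrightarrow> y' j < 0 \<longleftrightarrow> (j = j0 \<or> y j < 0)"
      unfolding y'_def using j0 by auto
    show "y' k + int (card {j\<in>{1..n}. j<k \<and> y' j<0}) + int (card {j\<in>{k<..n}. (j,k)\<in>D}) \<le> int (xs!(k-1)) - 1"
    proof (cases "j0 < k")
      case True
      have "y k \<noteq> 0" using j0(3) k True by fastforce
      hence yk': "y' k = y k - 1" using True yk0 k unfolding y'_def by auto
      have "{j\<in>{1..n}. j<k \<and> y' j<0} = insert j0 {j\<in>{1..n}. j<k \<and> y j<0}"
        using neg True j0(1) by auto
      moreover have "j0 \<notin> {j\<in>{1..n}. j<k \<and> y j<0}" using j0(2) by auto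
      ultimately have "card {j\<in>{1..n}. j<k \<and> y' j<0} = card {j\<in>{1..n}. j<k \<and> y j<0} + 1"
        by simp
      then show ?thesis using old yk' by simp
    next
      case False
      hence yk': "y' k = y k" using kj yk0 k unfolding y'_def by auto
      have "{j\<in>{1..n}. j<k \<and> y' j<0} = {j\<in>{1..n}. j<k \<and> y j<0}"
        using neg False by auto
      then show ?thesis using old yk' by simp
    qed
  qed
qed

lemma Inv_down:
  assumes n: "n = length xs" and I: "Inv xs (y,U,D)" and st: "down_step n (y,U,D) st'"
  shows "Inv xs st'"
proof -
  obtain j0 where j0: "\<forall>k \<in> {1..n}. y k \<noteq> 0"
    and st': "st' = ((\<lambda>k. if k \<in> {1..n} \<and> k < j0 \<and> 0 < y k then y k - 1 else y k),
                 U, D \<union> {(j0, k) | k. k \<in> {1..n} \<and> k < j0 \<and> 0 < y k})"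
    using down_E[OF st] by blast
  define y' where "y' = (\<lambda>k. if k \<in> {1..n} \<and> k < j0 \<and> 0 < y k then y k - 1 else y k)"
  define D' where "D' = D \<union> {(j0, k) | k. k \<in> {1..n} \<and> k < j0 \<and> 0 < y k}"
  show ?thesis unfolding st' Inv_def prod.case y'_def[symmetric] D'_def[symmetric] n[symmetric]
  proof (intro ballI impI)
    fix k assume k: "k \<in> {1..n}" and yk: "0 \<le> y' k"
    have yk0: "0 \<le> y k" using yk unfolding y'_def by (auto split: if_splits)
    have old: "y k + int (card {j\<in>{1..n}. j<k \<and> y j<0}) + int (card {j\<in>{k<..n}. (j,k)\<in>D}) \<le> int (xs!(k-1)) - 1"
      using I k yk0 unfolding Inv_def n by auto
    have "{j\<in>{1..n}. j<k \<and> y' j<0} = {j\<in>{1..n}. j<k \<and> y j<0}"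
      unfolding y'_def by auto
    moreover have "card {j\<in>{k<..n}. (j,k)\<in>D'} \<le> card {j\<in>{k<..n}. (j,k)\<in>D} + (if k < j0 \<and> 0 < y k then 1 else 0)"
    proof (cases "k < j0 \<and> 0 < y k")
      case True
      have "{j\<in>{k<..n}. (j,k)\<in>D'} \<subseteq> insert j0 {j\<in>{k<..n}. (j,k)\<in>D}" unfolding D'_def by auto
      hence "card {j\<in>{k<..n}. (j,k)\<in>D'} \<le> card (insert j0 {j\<in>{k<..n}. (j,k)\<in>D})"
        by (intro card_mono) auto
      also have "\<dots> \<le> card {j\<in>{k<..n}. (j,k)\<in>D} + 1" by (simp add: card_insert_le_m1 card_insert_if)
      finally show ?thesis using True by simp
    next
      case False
      have "{j\<in>{k<..n}. (j,k)\<in>D'} = {j\<in>{k<..n}. (j,k)\<in>D}" unfolding D'_def using False by auto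
      then show ?thesis by simp
    qed
    moreover have "y' k = y k - (if k < j0 \<and> 0 < y k then 1 else 0)" unfolding y'_def using k by auto
    ultimately show "y' k + int (card {j\<in>{1..n}. j<k \<and> y' j<0}) + int (card {j\<in>{k<..n}. (j,k)\<in>D'}) \<le> int (xs!(k-1)) - 1"
      using old by (auto split: if_splits)
  qed
qed



lemma mu_up: assumes "up_step n (y,U,D) (y',U',D')" shows "mu n y' < mu n y"
proof -
  obtain j0 where j0: "j0\<in>{1..n}" "y j0 = 0"
    and y': "y' = (\<lambda>k. if k \<notin> {1..n} then y k
                      else if k = j0 then -1
                      else if j0 < k \<and> 0 < y k then y k - 1
                      else if y k < 0 then y k - 1
                      else y k)"
  proof -
    obtain j0 where j0: "j0\<in>{1..n}" "y j0 = 0" and eq: "(y',U',D') = ((\<lambda>k. if k \<notin> {1..n} then y k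
                      else if k = j0 then -1
                      else if j0 < k \<and> 0 < y k then y k - 1
                      else if y k < 0 then y k - 1
                      else y k), U \<union> {(j0, k) | k. k \<in> {1..n} \<and> j0 < k \<and> 0 < y k}, D)"
      using up_E[OF assms] by blast
    from eq have "y' = (\<lambda>k. if k \<notin> {1..n} then y k
                      else if k = j0 then -1
                      else if j0 < k \<and> 0 < y k then y k - 1
                      else if y k < 0 then y k - 1
                      else y k)" by simp
    with j0 that show thesis by blast
  qed
  show ?thesis unfolding mu_def
  proof (rule sum_strict_mono_ex1)
    show "\<forall>k\<in>{1..n}. (if 0 \<le> y' k then nat (y' k + 1) else 0) \<le> (if 0 \<le> y k then nat (y k + 1) else 0)"
      unfolding y' by auto
    show "\<exists>k\<in>{1..n}. (if 0 \<le> y' k then nat (y' k + 1) else 0) < (if 0 \<le> y k then nat (y k + 1) else 0)"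
      using j0 unfolding y' by (intro bexI[of _ j0]) auto
  qed simp
qed

lemma mu_down: assumes "down_step n (y,U,D) (y',U',D')" shows "mu n y' < mu n y"
proof -
  obtain j0 where c: "down_cand n (y,U,D) j0"
    and y': "y' = (\<lambda>k. if k \<in> {1..n} \<and> k < j0 \<and> 0 < y k then y k - 1 else y k)"
  proof -
    obtain j0 where c: "down_cand n (y,U,D) j0" and eq: "(y',U',D') = ((\<lambda>k. if k \<in> {1..n} \<and> k < j0 \<and> 0 < y k then y k - 1 else y k),
                 U, D \<union> {(j0, k) | k. k \<in> {1..n} \<and> k < j0 \<and> 0 < y k})"
      using down_E[OF assms] by blast
    from eq have "y' = (\<lambda>k. if k \<in> {1..n} \<and> k < j0 \<and> 0 < y k then y k - 1 else y k)" by simp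
    with c that show thesis by blast
  qed
  obtain k0 where k0: "k0 \<in> {1..n}" "k0 < j0" "0 < y k0" using c unfolding down_cand_def by auto
  show ?thesis unfolding mu_def
  proof (rule sum_strict_mono_ex1)
    show "\<forall>k\<in>{1..n}. (if 0 \<le> y' k then nat (y' k + 1) else 0) \<le> (if 0 \<le> y k then nat (y k + 1) else 0)"
      unfolding y' by auto
    show "\<exists>k\<in>{1..n}. (if 0 \<le> y' k then nat (y' k + 1) else 0) < (if 0 \<le> y k then nat (y k + 1) else 0)"
      using k0 unfolding y' by (intro bexI[of _ k0]) auto
  qed simp
qed



lemma no_stuck:
  assumes pf: "parking_function xs" and n: "n = length xs" and I: "Inv xs (y,U,D)"
    and nz: "\<forall>k\<in>{1..n}. y k \<noteq> 0" and pos: "\<exists>k\<in>{1..n}. 0 < y k"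
  shows "\<exists>j. down_cand n (y,U,D) j"
proof (rule ccontr)
  assume "\<not> ?thesis"
  hence H: "\<And>k j. k\<in>{1..n} \<Longrightarrow> 0 < y k \<Longrightarrow> j \<in> {k<..n} \<Longrightarrow> (j,k)\<in>D"
    unfolding down_cand_def by fastforce
  define P where "P = {k\<in>{1..n}. 0 < y k}"
  define m where "m = card P"
  have finP: "finite P" unfolding P_def by auto
  have m1: "1 \<le> m" using pos finP unfolding m_def P_def by (auto simp: card_gt_0_iff Suc_le_eq)
  have mn: "m \<le> n" unfolding m_def P_def by (metis (no_types, lifting) card_atLeastAtMost card_mono diff_Suc_1 finite_atLeastAtMost mem_Collect_eq subsetI)
  have big: "int (n + 2) - int m \<le> int (xs!(k-1))" if kP: "k \<in> P" for k
  proof -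
    have k: "k \<in> {1..n}" "0 < y k" using kP unfolding P_def by auto
    have old: "y k + int (card {j\<in>{1..n}. j<k \<and> y j<0}) + int (card {j\<in>{k<..n}. (j,k)\<in>D}) \<le> int (xs!(k-1)) - 1"
      using I k unfolding Inv_def n by auto
    have "{j\<in>{k<..n}. (j,k)\<in>D} = {k<..n}" using H k by auto
    hence c1: "card {j\<in>{k<..n}. (j,k)\<in>D} = n - k" by simp
    have "{j\<in>{1..n}. j<k \<and> y j<0} = {1..<k} - {p\<in>P. p<k}"
      using nz k unfolding P_def by (auto simp: not_less order_le_less)
    moreover have "{p\<in>P. p<k} \<subseteq> {1..<k}" unfolding P_def by auto
    ultimately have c2: "card {j\<in>{1..n}. j<k \<and> y j<0} = (k - 1) - card {p\<in>P. p<k}"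
      by (simp add: card_Diff_subset finite_subset)
    have c3: "card {p\<in>P. p<k} \<le> k - 1"
      using card_mono[OF _ \<open>{p\<in>P. p<k} \<subseteq> {1..<k}\<close>] by simp
    have "{p\<in>P. p<k} \<subseteq> P - {k}" by auto
    hence "card {p\<in>P. p<k} \<le> card (P - {k})" using finP by (intro card_mono) auto
    hence c4: "card {p\<in>P. p<k} \<le> m - 1" using kP finP unfolding m_def by simp
    have "k \<le> n" "1 \<le> k" using k by auto
    then show ?thesis using old c1 c2 c3 c4 k(2) m1 by linarith
  qed
  define A where "A = {i\<in>{1..length xs}. xs!(i-1) \<le> n + 1 - m}"
  have cA: "n + 1 - m \<le> card A" unfolding A_def using pf_count[OF pf, of "n+1-m"] n m1 by simp
  have disj: "A \<inter> P = {}"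
  proof -
    { fix k assume "k \<in> A" "k \<in> P"
      then have "int (n + 2) - int m \<le> int (xs!(k-1))" "xs!(k-1) \<le> n+1-m" using big unfolding A_def by auto
      then have False using mn by linarith }
    thus ?thesis by blast
  qed
  have "A \<union> P \<subseteq> {1..n}" unfolding A_def P_def n by auto
  hence "card (A \<union> P) \<le> n" by (metis card_atLeastAtMost card_mono diff_Suc_1 finite_atLeastAtMost)
  moreover have "card (A \<union> P) = card A + card P" using disj finP
    by (intro card_Un_disjoint) (auto simp: A_def)
  ultimately show False using cA m1 mn unfolding m_def by linarith
qed



lemma progress:
  assumes pf: "parking_function xs" and n: "n = length xs" and I: "Inv xs (y,U,D)"
    and ns: "\<not> algA_stopped n (y,U,D)"
  shows "\<exists>st'. algA_step n (y,U,D) st'"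
proof (cases "\<exists>k\<in>{1..n}. y k = 0")
  case True
  define Z where "Z = {k\<in>{1..n}. y k = 0}"
  have fZ: "finite Z" "Z \<noteq> {}" using True unfolding Z_def by auto
  define j where "j = Max Z"
  have "j \<in> Z" using fZ unfolding j_def by simp
  moreover have "\<forall>k\<in>{1..n}. y k = 0 \<longrightarrow> k \<le> j" using fZ unfolding j_def Z_def by auto
  ultimately have "up_step n (y,U,D) ((\<lambda>k. if k \<notin> {1..n} then y k
                      else if k = j then -1
                      else if j < k \<and> 0 < y k then y k - 1
                      else if y k < 0 then y k - 1
                      else y k),
                 U \<union> {(j, k) | k. k \<in> {1..n} \<and> j < k \<and> 0 < y k},
                 D)" unfolding up_step_def Z_def by auto
  then show ?thesis unfolding algA_step_def by blast
next
  case False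
  then have nz: "\<forall>k\<in>{1..n}. y k \<noteq> 0" by auto
  moreover have pos: "\<exists>k\<in>{1..n}. 0 < y k" using ns nz unfolding algA_stopped_def by force
  ultimately obtain j1 where j1: "down_cand n (y,U,D) j1" using no_stuck[OF pf n I] by blast
  define C where "C = {j. down_cand n (y,U,D) j}"
  have fC: "finite C" "C \<noteq> {}" using j1 unfolding C_def down_cand_def
    by (auto intro: finite_subset[of _ "{1..n}"])
  have "Min (y ` C) \<in> y ` C" using fC by simp
  then obtain j where jC: "j \<in> C" and jm: "y j = Min (y ` C)" by auto
  have "\<forall>j'. down_cand n (y,U,D) j' \<longrightarrow> y j \<le> y j'" using fC jm unfolding C_def by auto
  hence "down_step n (y,U,D) ((\<lambda>k. if k \<in> {1..n} \<and> k < j \<and> 0 < y k then y k - 1 else y k),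
                 U, D \<union> {(j, k) | k. k \<in> {1..n} \<and> k < j \<and> 0 < y k})"
    unfolding down_step_def using nz pos jC unfolding C_def by auto
  then show ?thesis unfolding algA_step_def by blast
qed

lemma exists_run:
  assumes pf: "parking_function xs" and n: "n = length xs"
  shows "Inv xs st \<Longrightarrow> \<exists>st'. (algA_step n)\<^sup>*\<^sup>* st st' \<and> algA_stopped n st'"
proof (induction "mu n (fst st)" arbitrary: st rule: less_induct)
  case less
  obtain y U D where st: "st = (y,U,D)" by (cases st) auto
  show ?case
  proof (cases "algA_stopped n st")
    case True then show ?thesis by blast
  next
    case False
    then obtain st2 where s2: "algA_step n (y,U,D) st2" using progress[OF pf n] less.prems st by blast
    obtain y2 U2 D2 where st2: "st2 = (y2,U2,D2)" by (cases st2) auto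
    have "mu n y2 < mu n y" using s2 mu_up mu_down unfolding st2 algA_step_def by blast
    moreover have "Inv xs st2" using s2 Inv_up[OF n] Inv_down[OF n] less.prems st unfolding algA_step_def by blast
    ultimately obtain st' where "(algA_step n)\<^sup>*\<^sup>* st2 st' \<and> algA_stopped n st'"
      using less.hyps[of st2] st st2 by auto
    then show ?thesis using s2 st by (meson converse_rtranclp_into_rtranclp)
  qed
qed

lemma Inv_init: assumes pf: "parking_function xs" shows "Inv xs (algA_init xs)"
proof -
  have pos: "\<And>k. k \<in> {1..length xs} \<Longrightarrow> 0 < xs!(k-1)"
    using pf unfolding parking_function_def by (auto simp: nth_mem)
  have "\<And>k. {j\<in>{1..length xs}. j<k \<and> (if j \<in> {1..length xs} then int (xs ! (j - 1)) - 1 else 0) < 0} = {}"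
    using pos by fastforce
  then show ?thesis unfolding Inv_def algA_init_def by auto
qed

theorem lemma2p5:
  fixes xs :: "nat list" and n :: nat
  assumes "parking_function xs" and "n = length xs"
  shows "(\<exists>s U D W. algA_output xs s U D W) \<and>
         (\<forall>s U D W i j. algA_output xs s U D W \<longrightarrow> 1 \<le> i \<longrightarrow> i < j \<longrightarrow> j \<le> n \<longrightarrow>
            (\<bar>s i\<bar> > \<bar>s j\<bar> \<longleftrightarrow> (i, j) \<in> U))"
proof
  obtain st' where r: "(algA_step (length xs))\<^sup>*\<^sup>* (algA_init xs) st'" and sp: "algA_stopped (length xs) st'"
    using exists_run[OF assms(1) refl Inv_init[OF assms(1)]] by blast
  obtain s U D where "st' = (s,U,D)" by (cases st') auto
  then show "\<exists>s U D W. algA_output xs s U D W" using r sp unfolding algA_output_def by blast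
next
  show "\<forall>s U D W i j. algA_output xs s U D W \<longrightarrow> 1 \<le> i \<longrightarrow> i < j \<longrightarrow> j \<le> n \<longrightarrow>
            (\<bar>s i\<bar> > \<bar>s j\<bar> \<longleftrightarrow> (i, j) \<in> U)"
  proof (intro allI impI)
    fix s U D W i j assume o: "algA_output xs s U D W" and ij: "1 \<le> i" "i < j" "j \<le> n"
    have Jf: "J n (s,U,D)" using o J_reach[OF assms(1)] assms(2) unfolding algA_output_def by blast
    have neg: "s i < 0" "s j < 0" using o ij assms(2) unfolding algA_output_def algA_stopped_def by auto
    have "((i,j)\<in>U \<longrightarrow> s i<0 \<and> (s j \<ge> 0 \<or> s i < s j)) \<and> ((i,j)\<notin>U \<and> s i<0 \<longrightarrow> s j<0 \<and> s j < s i)"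
      using Jf ij unfolding J_def by auto
    then show "(\<bar>s i\<bar> > \<bar>s j\<bar> \<longleftrightarrow> (i, j) \<in> U)" using neg by auto
  qed
qed


end
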